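(* Let $m,n$ be even positive integers and let $f$ be the partial Boolean function on $2mn$ bits defined in the context. Then the nondeterministic quantum query complexity of $f$ satisfies $NQ(f)=\min(n/2,m/2)+1$.
   Context: For $z\in\{0,1\}^k$ let $w(z)$ denote its Hamming weight. Let $\mathcal{A}_1=\{0^m y : y\in\{0,1\}^m,\ m/2\le w(y)\le m\}$ and $\mathcal{A}_0=\{y0^m : y\in\{0,1\}^m,\ m/2\le w(y)\le m\}$. A string $x\in\{0,1\}^{2mn}$ is viewed as $n$ consecutive blocks of $2m$ bits. Define $\mathcal{X}_1=\mathcal{A}_0\times\cdots\times\mathcal{A}_0$ ($n$ factors) and $\mathcal{X}_0=\bigcup\{\mathcal{A}_{y_1}\times\cdots\times\mathcal{A}_{y_n} : y\in\{0,1\}^n,\ w(y)=n/2\}$. The partial function $f$ has domain $\mathcal{X}_0\cup\mathcal{X}_1$ with $f(x)=1$ on $\mathcal{X}_1$ and $f(x)=0$ on $\mathcal{X}_0$ (it is the composition of the Deutsch–Jozsa constant-vs-balanced function on $n$ bits with $n$ copies of the partial function $h$ on $2m$ bits that is $1$ on $\mathcal{A}_1$ and $0$ on $\mathcal{A}_0$). Quantum query model: the input $x\in\{0,1\}^N$ is accessed via the unitary $O_x:|i,b,z\rangle\mapsto|i,b\oplus x_i,z\rangle$; a $T$-query algorithm is $U_TO_xU_{T-1}\cdots O_xU_1O_xU_0$ applied to $|0\rangle$, with fixed unitaries $U_k$, followed by a measurement giving output $0$, $1$, or "don't know". A nondeterministic quantum algorithm for $f$ outputs $1$ with positive probability on every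 $x\in\mathcal{X}_1$ and with probability $0$ on every $x\in\mathcal{X}_0$. $NQ(f)$ is the minimal number of queries of such an algorithm. *)

theory Defs
  imports Complex_Main
begin

text \<open>Bit strings are functions nat => bool (True = 1); only positions below the
  input length matter. A block is a string of 2m bits, indexed 0..2m-1.\<close>

definition inA :: "nat \<Rightarrow> bool \<Rightarrow> (nat \<Rightarrow> bool) \<Rightarrow> bool" where
  "inA m c blk \<longleftrightarrow>
     (if c then (\<forall>i<m. \<not> blk i) \<and> m \<le> 2 * card {i. m \<le> i \<and> i < 2*m \<and> blk i}
           else (\<forall>i. m \<le> i \<and> i < 2*m \<longrightarrow> \<not> blk i) \<and> m \<le> 2 * card {i. i < m \<and> blk i})"

definition block :: "nat \<Rightarrow> (nat \<Rightarrow> bool) \<Rightarrow> nat \<Rightarrow> (nat \<Rightarrow> bool)" where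
  "block m x j = (\<lambda>i. x (2*m*j + i))"

text \<open>Inputs on which f = 1: every block lies in A_0.\<close>
definition X1 :: "nat \<Rightarrow> nat \<Rightarrow> (nat \<Rightarrow> bool) set" where
  "X1 m n = {x. \<forall>j<n. inA m False (block m x j)}"

text \<open>Inputs on which f = 0: block j lies in A_{y_j} for some y of weight n/2.\<close>
definition X0 :: "nat \<Rightarrow> nat \<Rightarrow> (nat \<Rightarrow> bool) set" where
  "X0 m n = {x. \<exists>y::nat \<Rightarrow> bool. 2 * card {j. j < n \<and> y j} = n \<and>
                   (\<forall>j<n. inA m (y j) (block m x j))}"

text \<open>Basis states |i,b,z> with query index i < N, answer bit b, workspace z < W.\<close>
type_synonym basis = "nat \<times> bool \<times> nat"

definition basis_set :: "nat \<Rightarrow> nat \<Rightarrow> basis set" where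
  "basis_set N W = {0..<N} \<times> UNIV \<times> {0..<W}"

definition unitary_on :: "basis set \<Rightarrow> (basis \<Rightarrow> basis \<Rightarrow> complex) \<Rightarrow> bool" where
  "unitary_on B U \<longleftrightarrow>
     (\<forall>a\<in>B. \<forall>b\<in>B. (\<Sum>c\<in>B. cnj (U c a) * U c b) = (if a = b then 1 else 0))"

definition apply_op :: "(basis \<Rightarrow> basis \<Rightarrow> complex) \<Rightarrow> basis set \<Rightarrow> (basis \<Rightarrow> complex) \<Rightarrow> (basis \<Rightarrow> complex)" where
  "apply_op U B v = (\<lambda>a. \<Sum>b\<in>B. U a b * v b)"

definition query_op :: "(nat \<Rightarrow> bool) \<Rightarrow> (basis \<Rightarrow> complex) \<Rightarrow> (basis \<Rightarrow> complex)" where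
  "query_op x v = (\<lambda>(i, b, z). v (i, b \<noteq> x i, z))"

definition init_state :: "basis \<Rightarrow> complex" where
  "init_state = (\<lambda>a. if a = (0, False, 0) then 1 else 0)"

fun run_queries :: "basis set \<Rightarrow> (nat \<Rightarrow> bool) \<Rightarrow> (basis \<Rightarrow> basis \<Rightarrow> complex) list
                     \<Rightarrow> (basis \<Rightarrow> complex) \<Rightarrow> (basis \<Rightarrow> complex)" where
  "run_queries B x [] v = v"
| "run_queries B x (U # Us) v = run_queries B x Us (apply_op U B (query_op x v))"

text \<open>Final state U_T O_x ... U_1 O_x U_0 |0>, where Us = [U_1, ..., U_T].\<close>
definition final_state :: "basis set \<Rightarrow> (nat \<Rightarrow> bool) \<Rightarrow> (basis \<Rightarrow> basis \<Rightarrow> complex)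
                          \<Rightarrow> (basis \<Rightarrow> basis \<Rightarrow> complex) list \<Rightarrow> (basis \<Rightarrow> complex)" where
  "final_state B x U0 Us = run_queries B x Us (apply_op U0 B init_state)"

definition accept_prob :: "basis set \<Rightarrow> (nat \<Rightarrow> bool) \<Rightarrow> (basis \<Rightarrow> basis \<Rightarrow> complex)
                          \<Rightarrow> (basis \<Rightarrow> basis \<Rightarrow> complex) list \<Rightarrow> basis set \<Rightarrow> real" where
  "accept_prob B x U0 Us S = (\<Sum>a\<in>S. (cmod (final_state B x U0 Us a))\<^sup>2)"

definition nq_algorithm :: "nat \<Rightarrow> nat \<Rightarrow> (nat \<Rightarrow> bool) set \<Rightarrow> (nat \<Rightarrow> bool) set \<Rightarrow> bool" where
  "nq_algorithm N T Xzero Xone \<longleftrightarrow>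
     (\<exists>W U0 Us S. W > 0 \<and> length Us = T \<and>
        unitary_on (basis_set N W) U0 \<and> (\<forall>U\<in>set Us. unitary_on (basis_set N W) U) \<and>
        S \<subseteq> basis_set N W \<and>
        (\<forall>x\<in>Xone. accept_prob (basis_set N W) x U0 Us S > 0) \<and>
        (\<forall>x\<in>Xzero. accept_prob (basis_set N W) x U0 Us S = 0))"

definition NQ :: "nat \<Rightarrow> (nat \<Rightarrow> bool) set \<Rightarrow> (nat \<Rightarrow> bool) set \<Rightarrow> nat" where
  "NQ N Xzero Xone = (LEAST T. nq_algorithm N T Xzero Xone)"

end

theory Submission
  imports Defs "HOL-Library.FuncSet"
begin

inductive deg_le :: "nat \<Rightarrow> ((nat \<Rightarrow> bool) \<Rightarrow> complex) \<Rightarrow> bool" where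
  dconst: "deg_le 0 (\<lambda>x. c)"
| dvar: "deg_le 1 (\<lambda>x. if x i then 1 else 0)"
| dadd: "deg_le d f \<Longrightarrow> deg_le d g \<Longrightarrow> deg_le d (\<lambda>x. f x + g x)"
| dmult: "deg_le d f \<Longrightarrow> deg_le e g \<Longrightarrow> deg_le (d+e) (\<lambda>x. f x * g x)"
| dmono: "deg_le d f \<Longrightarrow> d \<le> e \<Longrightarrow> deg_le e f"

lemma deg_le_eq: "deg_le d f \<Longrightarrow> (\<And>x. f x = g x) \<Longrightarrow> deg_le d g"
proof -
  assume "deg_le d f" "\<And>x. f x = g x"
  then have "f = g" by auto
  with \<open>deg_le d f\<close> show ?thesis by simp
qed

lemma deg_le_const: "deg_le d (\<lambda>x. c)"
  using dmono[OF dconst] by auto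

lemma deg_le_cmult: "deg_le d f \<Longrightarrow> deg_le d (\<lambda>x. c * f x)"
  using dmult[OF dconst, of d f c] by simp

lemma deg_le_sum: "finite A \<Longrightarrow> (\<And>a. a \<in> A \<Longrightarrow> deg_le d (f a)) \<Longrightarrow> deg_le d (\<lambda>x. \<Sum>a\<in>A. f a x)"
proof (induction A rule: finite_induct)
  case empty
  then show ?case using deg_le_const[of d 0] by simp
next
  case (insert a A)
  then show ?case using dadd[of d "f a" "\<lambda>x. \<Sum>a\<in>A. f a x"] by simp
qed

lemma deg_le_subst:
  assumes "deg_le d P" and "\<And>i. deg_le 1 (\<lambda>y. if \<sigma> y i then 1 else 0)"
  shows "deg_le d (\<lambda>y. P (\<sigma> y))"
  using assms(1)
proof induction
  case (dconst c)
  then show ?case by (rule deg_le.dconst)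
next
  case (dvar i)
  then show ?case using assms(2) by simp
next
  case (dadd d f g)
  then show ?case using deg_le.dadd by blast
next
  case (dmult d f e g)
  then show ?case using deg_le.dmult by blast
next
  case (dmono d f e)
  then show ?case using deg_le.dmono by blast
qed

lemma deg0_const: "deg_le d f \<Longrightarrow> d = 0 \<Longrightarrow> f x = f y"
proof (induction rule: deg_le.induct)
  case (dmult d f e g)
  then show ?case by simp
next
  case (dmono d f e)
  then show ?case by simp
qed simp_all

definition Dv :: "nat \<Rightarrow> ((nat \<Rightarrow> bool) \<Rightarrow> complex) \<Rightarrow> ((nat \<Rightarrow> bool) \<Rightarrow> complex)" where
  "Dv v f = (\<lambda>y. f (y(v:=True)) - f (y(v:=False)))"

lemma deg_le_upd: "deg_le d f \<Longrightarrow> deg_le d (\<lambda>y. f (y(v:=c)))"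
proof (rule deg_le_subst)
  fix i
  show "deg_le 1 (\<lambda>y. if (y(v:=c)) i then 1 else 0)"
  proof (cases "i = v")
    case True
    then show ?thesis using deg_le_const[of 1 "if c then 1 else 0"] by simp
  next
    case False
    then show ?thesis using dvar[of i] by simp
  qed
qed

lemma deg_le_Dv: "deg_le d f \<Longrightarrow> deg_le (d - 1) (Dv v f)"
proof (induction rule: deg_le.induct)
  case (dconst c)
  then show ?case using deg_le_const[of 0 0] by (simp add: Dv_def)
next
  case (dvar i)
  have "deg_le 0 (Dv v (\<lambda>a. if a i then 1 else 0))"
    using deg_le_const[of 0 "if i = v then 1 else 0"] by (rule deg_le_eq) (simp add: Dv_def)
  then show ?case by simp
next
  case (dadd d f g)
  have "deg_le (d - 1) (\<lambda>y. Dv v f y + Dv v g y)" using dadd deg_le.dadd by blast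
  then show ?case by (rule deg_le_eq) (simp add: Dv_def)
next
  case (dmult d f e g)
  have eq: "Dv v (\<lambda>x. f x * g x) y = Dv v f y * g (y(v:=True)) + f (y(v:=False)) * Dv v g y" for y
    by (simp add: Dv_def algebra_simps)
  have g1: "deg_le e (\<lambda>y. g (y(v:=True)))" using deg_le_upd dmult by blast
  have f0: "deg_le d (\<lambda>y. f (y(v:=False)))" using deg_le_upd dmult by blast
  show ?case
  proof (cases "d = 0")
    case True
    have "Dv v f y = 0" for y using deg0_const[OF dmult(1) True] by (simp add: Dv_def)
    then have "deg_le (d + e - 1) (\<lambda>y. f (y(v:=False)) * Dv v g y)"
      using deg_le.dmult[OF f0 dmult(4)] True by simp
    then show ?thesis by (rule deg_le_eq) (use True \<open>\<And>y. Dv v f y = 0\<close> eq in simp)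
  next
    case dnz: False
    show ?thesis
    proof (cases "e = 0")
      case True
      have "Dv v g y = 0" for y using deg0_const[OF dmult(2) True] by (simp add: Dv_def)
      then have "deg_le (d + e - 1) (\<lambda>y. Dv v f y * g (y(v:=True)))"
        using deg_le.dmult[OF dmult(3) g1] True by simp
      then show ?thesis by (rule deg_le_eq) (use True \<open>\<And>y. Dv v g y = 0\<close> eq in simp)
    next
      case False
      have a: "deg_le (d + e - 1) (\<lambda>y. Dv v f y * g (y(v:=True)))"
        using deg_le.dmult[OF dmult(3) g1] dnz by (simp add: add.commute)
      have b: "deg_le (d + e - 1) (\<lambda>y. f (y(v:=False)) * Dv v g y)"
        using deg_le.dmult[OF f0 dmult(4)] False by simp
      show ?thesis using deg_le.dadd[OF a b] by (rule deg_le_eq) (simp add: eq)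
    qed
  qed
next
  case (dmono d f e)
  then show ?case using deg_le.dmono diff_le_mono by blast
qed


lemma flip_zero:
  fixes g :: "(nat \<Rightarrow> bool) \<Rightarrow> complex"
  assumes fin: "finite V" and tV: "t \<le> card V"
    and van: "\<forall>Y\<subseteq>V. t \<le> card Y \<longrightarrow> g (\<lambda>i. i \<in> Y) = 0"
    and fl: "\<And>v Y. v \<in> V \<Longrightarrow> Y \<subseteq> V \<Longrightarrow> v \<notin> Y \<Longrightarrow> g (\<lambda>i. i \<in> insert v Y) = g (\<lambda>i. i \<in> Y)"
  shows "Y \<subseteq> V \<Longrightarrow> g (\<lambda>i. i \<in> Y) = 0"
proof (induction "card V - card Y" arbitrary: Y rule: less_induct)
  case (less Y)
  show ?case
  proof (cases "t \<le> card Y")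
    case True
    then show ?thesis using van less by blast
  next
    case False
    then have "card Y < card V" using tV by simp
    then have "Y \<noteq> V" by auto
    with less obtain v where v: "v \<in> V" "v \<notin> Y" by blast
    have fY: "finite Y" using less fin finite_subset by blast
    have "card (insert v Y) = card Y + 1" using v fY by simp
    moreover have "card (insert v Y) \<le> card V" using v less fin by (intro card_mono) auto
    ultimately have "card V - card (insert v Y) < card V - card Y" by simp
    then have "g (\<lambda>i. i \<in> insert v Y) = 0" using less v by blast
    then show ?thesis using fl v less by simp
  qed
qed

lemma core:
  fixes g :: "(nat \<Rightarrow> bool) \<Rightarrow> complex"
  assumes "deg_le d g" "finite V" "d + t \<le> card V"
    "\<forall>Y\<subseteq>V. t \<le> card Y \<longrightarrow> g (\<lambda>i. i \<in> Y) = 0" "Y \<subseteq> V"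
  shows "g (\<lambda>i. i \<in> Y) = 0"
  using assms
proof (induction d arbitrary: g V Y)
  case 0
  have "g (\<lambda>i. i \<in> Y) = g (\<lambda>i. i \<in> V)" using deg0_const[OF 0(1)] by simp
  also have "\<dots> = 0" using 0 by simp
  finally show ?case .
next
  case (Suc d)
  have fl: "g (\<lambda>i. i \<in> insert v Z) = g (\<lambda>i. i \<in> Z)" if v: "v \<in> V" "Z \<subseteq> V" "v \<notin> Z" for v Z
  proof -
    have dg: "deg_le d (Dv v g)" using deg_le_Dv[OF Suc(2)] by simp
    have fV: "finite (V - {v})" using Suc by simp
    have cV: "d + t \<le> card (V - {v})" using Suc(4) v Suc(3) by simp
    have vanD: "\<forall>Y\<subseteq>V - {v}. t \<le> card Y \<longrightarrow> Dv v g (\<lambda>i. i \<in> Y) = 0"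
    proof (intro allI impI)
      fix Y assume Y: "Y \<subseteq> V - {v}" "t \<le> card Y"
      have fY: "finite Y" using Y Suc(3) finite_subset by blast
      have e1: "(\<lambda>i. i \<in> Y)(v:=True) = (\<lambda>i. i \<in> insert v Y)" by (auto simp: fun_eq_iff)
      have e0: "(\<lambda>i. i \<in> Y)(v:=False) = (\<lambda>i. i \<in> Y)" using Y by (auto simp: fun_eq_iff)
      have "card (insert v Y) \<ge> t" using Y fY by (simp add: card_insert_if)
      moreover have "insert v Y \<subseteq> V" using Y v by auto
      ultimately have "g (\<lambda>i. i \<in> insert v Y) = 0" using Suc(5) by blast
      moreover have "g (\<lambda>i. i \<in> Y) = 0" using Suc(5) Y by blast
      ultimately show "Dv v g (\<lambda>i. i \<in> Y) = 0" by (simp add: Dv_def e1 e0)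
    qed
    have "Dv v g (\<lambda>i. i \<in> Z) = 0" using Suc.IH[OF dg fV cV vanD] v by blast
    moreover have "(\<lambda>i. i \<in> Z)(v:=True) = (\<lambda>i. i \<in> insert v Z)" by (auto simp: fun_eq_iff)
    moreover have "(\<lambda>i. i \<in> Z)(v:=False) = (\<lambda>i. i \<in> Z)" using v by (auto simp: fun_eq_iff)
    ultimately show ?thesis by (simp add: Dv_def)
  qed
  show ?case
    by (rule flip_zero[OF Suc(3) _ Suc(5) fl Suc(6)]) (use Suc(4) in auto)
qed


lemma deg_le_query:
  assumes "\<And>a. deg_le k (\<lambda>x. v x a)"
  shows "deg_le (k + 1) (\<lambda>x. query_op x (v x) a)"
proof -
  obtain i b z where a: "a = (i, b, z)" by (cases a) auto
  have n1: "deg_le 1 (\<lambda>x. 1 + (-1) * (if x i then 1 else 0) :: complex)"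
    using dadd[OF deg_le_const deg_le_cmult[OF dvar]] .
  have t1: "deg_le (1 + k) (\<lambda>x. (if x i then 1 else 0) * v x (i, \<not> b, z))"
    using dmult[OF dvar assms] .
  have t2: "deg_le (1 + k) (\<lambda>x. (1 + (-1) * (if x i then 1 else 0)) * v x (i, b, z))"
    using dmult[OF n1 assms] .
  have "deg_le (k + 1) (\<lambda>x. (if x i then 1 else 0) * v x (i, \<not> b, z) + (1 + (-1) * (if x i then 1 else 0)) * v x (i, b, z))"
    using dadd[OF t1 t2] by (simp add: add.commute)
  then show ?thesis by (rule deg_le_eq) (simp add: a query_op_def add.commute)
qed

lemma deg_le_run:
  assumes "finite B"
  shows "(\<And>a. deg_le k (\<lambda>x. v x a)) \<Longrightarrow> deg_le (k + length Us) (\<lambda>x. run_queries B x Us (v x) a)"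
proof (induction Us arbitrary: k v)
  case Nil
  then show ?case by simp
next
  case (Cons U Us)
  have "deg_le (k + 1) (\<lambda>x. apply_op U B (query_op x (v x)) a)" for a
    unfolding apply_op_def
    by (rule deg_le_sum[OF assms]) (rule deg_le_cmult, rule deg_le_query, rule Cons.prems)
  from Cons.IH[of "k+1" "\<lambda>x. apply_op U B (query_op x (v x))", OF this]
  show ?case by simp
qed

lemma deg_le_final:
  assumes "finite B"
  shows "deg_le (length Us) (\<lambda>x. final_state B x U0 Us a)"
  unfolding final_state_def
  using deg_le_run[OF assms, of 0 "\<lambda>x. apply_op U0 B init_state" Us a] deg_le_const by simp


lemma inA_cong: "(\<And>i. i < 2*m \<Longrightarrow> b1 i = b2 i) \<Longrightarrow> inA m c b1 = inA m c b2"
proof -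
  assume h: "\<And>i. i < 2*m \<Longrightarrow> b1 i = b2 i"
  have s1: "{i. m \<le> i \<and> i < 2*m \<and> b1 i} = {i. m \<le> i \<and> i < 2*m \<and> b2 i}" using h by auto
  have s2: "{i. i < m \<and> b1 i} = {i. i < m \<and> b2 i}" using h by auto
  have a1: "(\<forall>i<m. \<not> b1 i) = (\<forall>i<m. \<not> b2 i)" using h by auto
  have a2: "(\<forall>i. m \<le> i \<and> i < 2*m \<longrightarrow> \<not> b1 i) = (\<forall>i. m \<le> i \<and> i < 2*m \<longrightarrow> \<not> b2 i)" using h by auto
  show ?thesis unfolding inA_def using s1 s2 a1 a2 by simp
qed

lemma inA_nz: "0 < m \<Longrightarrow> inA m c blk \<Longrightarrow> \<exists>i<2*m. blk i"
proof -
  assume m: "0 < m" and h: "inA m c blk"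
  show ?thesis
  proof (cases c)
    case True
    then have "m \<le> 2 * card {i. m \<le> i \<and> i < 2*m \<and> blk i}" using h by (simp add: inA_def)
    then have "card {i. m \<le> i \<and> i < 2*m \<and> blk i} \<noteq> 0" using m by linarith
    then have "{i. m \<le> i \<and> i < 2*m \<and> blk i} \<noteq> {}" by (metis card.empty)
    then show ?thesis by auto
  next
    case False
    then have "m \<le> 2 * card {i. i < m \<and> blk i}" using h by (simp add: inA_def)
    then have "card {i. i < m \<and> blk i} \<noteq> 0" using m by linarith
    then have "{i. i < m \<and> blk i} \<noteq> {}" by (metis card.empty)
    then obtain i where "i < m" "blk i" by auto
    then show ?thesis by (intro exI[of _ i]) auto
  qed
qed

lemma inA0_not1: "0 < m \<Longrightarrow> inA m False blk \<Longrightarrow> \<not> inA m True blk"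
proof
  assume m: "0 < m" and h0: "inA m False blk" and h1: "inA m True blk"
  have "m \<le> 2 * card {i. i < m \<and> blk i}" using h0 by (simp add: inA_def)
  then have "card {i. i < m \<and> blk i} \<noteq> 0" using m by linarith
  then have "{i. i < m \<and> blk i} \<noteq> {}" by (metis card.empty)
  moreover have "\<forall>i<m. \<not> blk i" using h1 by (simp add: inA_def)
  ultimately show False by auto
qed

lemma divmod_blk:
  fixes m i j :: nat
  assumes "0 < m" "i < 2*m"
  shows "(2*m*j + i) div (2*m) = j" "(2*m*j + i) mod (2*m) = i"
  using assms by auto

definition zb :: "nat \<Rightarrow> (nat \<Rightarrow> bool) \<Rightarrow> nat \<Rightarrow> bool" where
  "zb m z j \<longleftrightarrow> (\<forall>i<2*m. \<not> z (2*m*j + i))"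

definition gen :: "nat \<Rightarrow> nat \<Rightarrow> (nat \<Rightarrow> bool) \<Rightarrow> bool" where
  "gen m n z \<longleftrightarrow> (\<forall>j<n. inA m False (block m z j) \<or> inA m True (block m z j) \<or> zb m z j)"

definition cnt1 :: "nat \<Rightarrow> nat \<Rightarrow> (nat \<Rightarrow> bool) \<Rightarrow> nat" where
  "cnt1 m n z = card {j. j < n \<and> inA m True (block m z j)}"

definition cnt0 :: "nat \<Rightarrow> nat \<Rightarrow> (nat \<Rightarrow> bool) \<Rightarrow> nat" where
  "cnt0 m n z = card {j. j < n \<and> zb m z j}"

definition rep :: "nat \<Rightarrow> (nat \<Rightarrow> bool) \<Rightarrow> nat \<Rightarrow> (nat \<Rightarrow> bool) \<Rightarrow> bool \<Rightarrow> (nat \<Rightarrow> bool)" where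
  "rep m z j w c = (\<lambda>p. if p div (2*m) = j then
      (if c then m \<le> p mod (2*m) \<and> w (p mod (2*m) - m) else p mod (2*m) < m \<and> w (p mod (2*m)))
      else z p)"

lemma rep_other: "0 < m \<Longrightarrow> j' \<noteq> j \<Longrightarrow> i < 2*m \<Longrightarrow> rep m z j w c (2*m*j' + i) = z (2*m*j' + i)"
  unfolding rep_def using divmod_blk by simp

lemma rep_same: "0 < m \<Longrightarrow> i < 2*m \<Longrightarrow> rep m z j w c (2*m*j + i) = (if c then m \<le> i \<and> w (i - m) else i < m \<and> w i)"
  unfolding rep_def using divmod_blk by simp

lemma inA_rep_other: "0 < m \<Longrightarrow> j' \<noteq> j \<Longrightarrow> inA m c' (block m (rep m z j w c) j') = inA m c' (block m z j')"
  by (rule inA_cong) (simp add: block_def rep_other)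

lemma zb_rep_other: "0 < m \<Longrightarrow> j' \<noteq> j \<Longrightarrow> zb m (rep m z j w c) j' = zb m z j'"
  by (simp add: zb_def rep_other)

lemma inA_rep_same:
  assumes m: "0 < m" "even m" and Y: "Y \<subseteq> {..<m}" "m div 2 \<le> card Y"
  shows "inA m c (block m (rep m z j (\<lambda>i. i \<in> Y) c) j)"
proof -
  have bl: "block m (rep m z j (\<lambda>i. i \<in> Y) c) j i = (if c then m \<le> i \<and> i - m \<in> Y else i < m \<and> i \<in> Y)"
    if "i < 2*m" for i using rep_same[OF m(1) that] by (simp add: block_def)
  have mY: "m \<le> 2 * card Y" using m Y by auto
  show ?thesis
  proof (cases c)
    case True
    have "{i. m \<le> i \<and> i < 2*m \<and> block m (rep m z j (\<lambda>i. i \<in> Y) c) j i} = (\<lambda>i. i + m) ` Y"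
    proof (rule set_eqI, rule iffI)
      fix i assume "i \<in> {i. m \<le> i \<and> i < 2*m \<and> block m (rep m z j (\<lambda>i. i \<in> Y) c) j i}"
      then have "m \<le> i" "i - m \<in> Y" using bl True by auto
      then show "i \<in> (\<lambda>i. i + m) ` Y" by (intro image_eqI[of _ _ "i - m"]) auto
    next
      fix i assume "i \<in> (\<lambda>i. i + m) ` Y"
      then obtain k where k: "k \<in> Y" "i = k + m" by auto
      then have "k < m" using Y by auto
      then show "i \<in> {i. m \<le> i \<and> i < 2*m \<and> block m (rep m z j (\<lambda>i. i \<in> Y) c) j i}"
        using bl True k by auto
    qed
    moreover have "card ((\<lambda>i. i + m) ` Y) = card Y" by (rule card_image) (simp add: inj_on_def)
    moreover have "\<forall>i<m. \<not> block m (rep m z j (\<lambda>i. i \<in> Y) c) j i" using bl True by simp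
    ultimately show ?thesis using True mY by (simp add: inA_def)
  next
    case False
    have "{i. i < m \<and> block m (rep m z j (\<lambda>i. i \<in> Y) c) j i} = Y"
      using bl False Y by auto
    moreover have "\<forall>i. m \<le> i \<and> i < 2*m \<longrightarrow> \<not> block m (rep m z j (\<lambda>i. i \<in> Y) c) j i" using bl False by simp
    ultimately show ?thesis using False mY by (simp add: inA_def)
  qed
qed

lemma rep_empty: "0 < m \<Longrightarrow> zb m z j \<Longrightarrow> rep m z j (\<lambda>i. i \<in> {}) c = z"
proof (rule ext)
  fix p assume m: "0 < m" and z: "zb m z j"
  show "rep m z j (\<lambda>i. i \<in> {}) c p = z p"
  proof (cases "p div (2*m) = j")
    case True
    have "p div (2*m) * (2*m) + p mod (2*m) = p" by (rule div_mult_mod_eq)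
    then have "p = 2*m*j + p mod (2*m)" using True by (metis mult.commute)
    moreover have "p mod (2*m) < 2*m" using m by simp
    ultimately have "\<not> z p" using z unfolding zb_def by metis
    then show ?thesis using True by (simp add: rep_def)
  qed (simp add: rep_def)
qed

lemma deg_le_rep: "deg_le d P \<Longrightarrow> deg_le d (\<lambda>w. P (rep m z j w c))"
proof (rule deg_le_subst)
  fix p
  show "deg_le 1 (\<lambda>w. if rep m z j w c p then 1 else 0)"
  proof (cases "p div (2*m) = j")
    case True
    show ?thesis
    proof (cases "if c then m \<le> p mod (2*m) else p mod (2*m) < m")
      case cnd: True
      let ?q = "if c then p mod (2*m) - m else p mod (2*m)"
      have "deg_le 1 (\<lambda>w. if w ?q then 1 else 0)" by (rule dvar)
      then show ?thesis by (rule deg_le_eq) (use True cnd in \<open>auto simp: rep_def\<close>)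
    next
      case cnd: False
      show ?thesis using deg_le_const[of 1 0] by (rule deg_le_eq) (use True cnd in \<open>auto simp: rep_def\<close>)
    qed
  next
    case False
    show ?thesis using deg_le_const[of 1 "if z p then 1 else 0"] by (rule deg_le_eq) (use False in \<open>auto simp: rep_def\<close>)
  qed
qed


lemma claimC:
  assumes m: "0 < m" "even m" and n: "even n"
    and d: "2*d \<le> m" and P: "deg_le d P" and P0: "\<And>x. x \<in> X0 m n \<Longrightarrow> P x = 0"
  shows "gen m n z \<Longrightarrow> cnt0 m n z = k \<Longrightarrow> 2 * cnt1 m n z \<le> n \<Longrightarrow> n \<le> 2 * (cnt1 m n z + cnt0 m n z) \<Longrightarrow> P z = 0"
proof (induction k arbitrary: z)
  case 0
  let ?y = "\<lambda>j. inA m True (block m z j)"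
  have "{j. j < n \<and> zb m z j} = {}" using 0 by (simp add: cnt0_def)
  then have nz: "\<And>j. j < n \<Longrightarrow> \<not> zb m z j" by auto
  have "2 * card {j. j < n \<and> ?y j} = n" using 0 by (simp add: cnt1_def)
  moreover have "\<forall>j<n. inA m (?y j) (block m z j)"
  proof (intro allI impI)
    fix j assume j: "j < n"
    show "inA m (?y j) (block m z j)" using 0(1) nz[OF j] j unfolding gen_def by (cases "?y j") auto
  qed
  ultimately have "z \<in> X0 m n" unfolding X0_def mem_Collect_eq by (intro exI[of _ ?y]) blast
  then show ?case using P0 by blast
next
  case (Suc k)
  have "card {j. j < n \<and> zb m z j} \<noteq> 0" using Suc.prems(2) by (simp add: cnt0_def)
  then have "{j. j < n \<and> zb m z j} \<noteq> {}" by (metis card.empty)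
  then obtain j where j: "j < n" "zb m z j" by auto
  have jn1: "\<not> inA m True (block m z j)"
  proof
    assume "inA m True (block m z j)"
    then obtain i where "i < 2*m" "block m z j i" using inA_nz[OF m(1)] by blast
    then show False using j(2) by (simp add: zb_def block_def)
  qed
  define c where "c = (2 * cnt1 m n z < n)"
  let ?g = "\<lambda>w. P (rep m z j w c)"
  have dg: "deg_le d ?g" by (rule deg_le_rep[OF P])
  have van: "\<forall>Y\<subseteq>{..<m}. m div 2 \<le> card Y \<longrightarrow> ?g (\<lambda>i. i \<in> Y) = 0"
  proof (intro allI impI)
    fix Y assume Y: "Y \<subseteq> {..<m}" "m div 2 \<le> card Y"
    let ?z = "rep m z j (\<lambda>i. i \<in> Y) c"
    have inj: "inA m c (block m ?z j)" by (rule inA_rep_same[OF m Y])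
    have nzj: "\<not> zb m ?z j"
    proof
      assume "zb m ?z j"
      then show False using inA_nz[OF m(1) inj] unfolding zb_def block_def by blast
    qed
    have oth: "\<And>j' c'. j' \<noteq> j \<Longrightarrow> inA m c' (block m ?z j') = inA m c' (block m z j')"
      using inA_rep_other[OF m(1)] by blast
    have othz: "\<And>j'. j' \<noteq> j \<Longrightarrow> zb m ?z j' = zb m z j'"
      using zb_rep_other[OF m(1)] by blast
    have gz: "gen m n ?z"
      unfolding gen_def
    proof (intro allI impI)
      fix j' assume "j' < n"
      show "inA m False (block m ?z j') \<or> inA m True (block m ?z j') \<or> zb m ?z j'"
      proof (cases "j' = j")
        case True then show ?thesis using inj by (cases c) auto
      next
        case False then show ?thesis using Suc.prems(1) \<open>j' < n\<close> oth othz unfolding gen_def by simp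
      qed
    qed
    have S0: "{j'. j' < n \<and> zb m ?z j'} = {j'. j' < n \<and> zb m z j'} - {j}"
      using othz nzj by (auto, metis)
    have c0z: "cnt0 m n ?z = k"
      using Suc.prems(2) j unfolding cnt0_def S0 by simp
    have fin1: "finite {j'. j' < n \<and> inA m True (block m z j')}" by simp
    have c1z: "cnt1 m n ?z = cnt1 m n z + (if c then 1 else 0)"
    proof (cases c)
      case True
      have "{j'. j' < n \<and> inA m True (block m ?z j')} = insert j {j'. j' < n \<and> inA m True (block m z j')}"
        apply (rule set_eqI)
        subgoal for x using oth[of x True] inj True j(1) jn1 by (cases "x = j") auto
        done
      then show ?thesis using True jn1 fin1 unfolding cnt1_def by simp
    next
      case False
      have "\<not> inA m True (block m ?z j)" using inA0_not1[OF m(1)] inj False by simp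
      have "{j'. j' < n \<and> inA m True (block m ?z j')} = {j'. j' < n \<and> inA m True (block m z j')}"
        apply (rule set_eqI)
        subgoal for x using oth[of x True] jn1 \<open>\<not> inA m True (block m ?z j)\<close> by (cases "x = j") auto
        done
      then show ?thesis using False unfolding cnt1_def by simp
    qed
    have "P ?z = 0"
    proof (rule Suc.IH[OF gz c0z])
      show "2 * cnt1 m n ?z \<le> n" using c1z c_def n Suc.prems(3) by (cases c) auto
      show "n \<le> 2 * (cnt1 m n ?z + cnt0 m n ?z)" using c1z c0z c_def Suc.prems(2-4) by (cases c) auto
    qed
    then show "?g (\<lambda>i. i \<in> Y) = 0" .
  qed
  have "?g (\<lambda>i. i \<in> {}) = 0"
    by (rule core[OF dg _ _ van]) (use d m in auto)
  then show ?case using rep_empty[OF m(1) j(2)] by simp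
qed

lemma key:
  assumes m: "0 < m" "even m" and n: "even n" "0 < n"
    and d: "2*d \<le> m" "2*d \<le> n" and P: "deg_le d P" and P0: "\<And>x. x \<in> X0 m n \<Longrightarrow> P x = 0"
    and x: "x \<in> X1 m n"
  shows "P x = 0"
proof -
  let ?s = "\<lambda>y p. x p \<and> \<not> y (p div (2*m))"
  let ?Q = "\<lambda>y. P (?s y)"
  have dQ: "deg_le d ?Q"
  proof (rule deg_le_subst[OF P])
    fix p
    show "deg_le 1 (\<lambda>y. if ?s y p then 1 else 0)"
    proof (cases "x p")
      case True
      have "deg_le 1 (\<lambda>y. 1 + (-1) * (if y (p div (2*m)) then 1 else 0) :: complex)"
        using dadd[OF deg_le_const deg_le_cmult[OF dvar]] .
      then show ?thesis by (rule deg_le_eq) (use True in auto)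
    next
      case False
      show ?thesis using deg_le_const[of 1 0] by (rule deg_le_eq) (use False in auto)
    qed
  qed
  have xb: "\<And>j. j < n \<Longrightarrow> inA m False (block m x j)" using x by (simp add: X1_def)
  have van: "\<forall>Y\<subseteq>{..<n}. n div 2 \<le> card Y \<longrightarrow> ?Q (\<lambda>i. i \<in> Y) = 0"
  proof (intro allI impI)
    fix Y assume Y: "Y \<subseteq> {..<n}" "n div 2 \<le> card Y"
    let ?z = "?s (\<lambda>i. i \<in> Y)"
    have bl: "block m ?z j i = (x (2*m*j + i) \<and> j \<notin> Y)" if "i < 2*m" for i j
      using divmod_blk[OF m(1) that] by (simp add: block_def)
    have A0: "inA m False (block m ?z j)" if "j < n" "j \<notin> Y" for j
    proof -
      have "inA m False (block m ?z j) = inA m False (block m x j)"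
        by (rule inA_cong) (use bl that in \<open>simp add: block_def\<close>)
      then show ?thesis using xb that by simp
    qed
    have Z: "zb m ?z j" if "j \<in> Y" for j using bl that by (simp add: zb_def block_def)
    have nZ: "\<not> zb m ?z j" if jj: "j < n" "j \<notin> Y" for j
    proof
      assume zz: "zb m ?z j"
      obtain i where "i < 2*m" "block m ?z j i" using inA_nz[OF m(1) A0[OF jj]] by blast
      then show False using zz by (simp add: zb_def block_def)
    qed
    have n1: "\<not> inA m True (block m ?z j)" if "j < n" for j
    proof (cases "j \<in> Y")
      case True
      show ?thesis
      proof
        assume "inA m True (block m ?z j)"
        then obtain i where "i < 2*m" "block m ?z j i" using inA_nz[OF m(1)] by blast
        then show False using Z[OF True] by (simp add: zb_def block_def)
      qed
    next
      case False
      then show ?thesis using inA0_not1[OF m(1) A0[OF that False]] by simp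
    qed
    have g: "gen m n ?z" unfolding gen_def using A0 Z by blast
    have "{j. j < n \<and> zb m ?z j} = Y" using Z nZ Y(1) by auto
    then have c0z: "cnt0 m n ?z = card Y" by (simp add: cnt0_def)
    have "{j. j < n \<and> inA m True (block m ?z j)} = {}" using n1 by auto
    then have c1z: "cnt1 m n ?z = 0" by (simp add: cnt1_def)
    show "?Q (\<lambda>i. i \<in> Y) = 0"
      by (rule claimC[OF m n(1) d(1) P P0 g refl]) (use c1z c0z Y n in auto)
  qed
  have "?Q (\<lambda>i. i \<in> {}) = 0"
    by (rule core[OF dQ _ _ van]) (use d n in auto)
  moreover have "?s (\<lambda>i. i \<in> {}) = x" by auto
  ultimately show ?thesis by simp
qed


lemma X1_ex:
  assumes m: "0 < m"
  shows "(\<lambda>p. p mod (2*m) < m) \<in> X1 m n"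
proof -
  have bl: "block m (\<lambda>p. p mod (2*m) < m) j i = (i < m)" if "i < 2*m" for i j
    using divmod_blk[OF m that] by (simp add: block_def)
  have "inA m False (block m (\<lambda>p. p mod (2*m) < m) j)" for j
  proof -
    have "{i. i < m \<and> block m (\<lambda>p. p mod (2*m) < m) j i} = {..<m}" using bl by auto
    then show ?thesis using bl by (simp add: inA_def)
  qed
  then show ?thesis by (simp add: X1_def)
qed

lemma finite_basis_set: "finite (basis_set N W)"
  unfolding basis_set_def by simp

lemma lower:
  assumes m: "0 < m" "even m" and n: "even n" "0 < n"
    and alg: "nq_algorithm (2*m*n) T (X0 m n) (X1 m n)" and T: "2*T \<le> m" "2*T \<le> n"
  shows False
proof -
  obtain W U0 Us S where W: "W > 0" and len: "length Us = T"
    and S: "S \<subseteq> basis_set (2*m*n) W"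
    and acc1: "\<forall>x\<in>X1 m n. accept_prob (basis_set (2*m*n) W) x U0 Us S > 0"
    and acc0: "\<forall>x\<in>X0 m n. accept_prob (basis_set (2*m*n) W) x U0 Us S = 0"
    using alg unfolding nq_algorithm_def by blast
  let ?B = "basis_set (2*m*n) W"
  have finS: "finite S" using S finite_basis_set finite_subset by blast
  let ?x = "\<lambda>p. p mod (2*m) < m"
  have x1: "?x \<in> X1 m n" by (rule X1_ex[OF m(1)])
  have pos: "accept_prob ?B ?x U0 Us S > 0" using acc1 x1 by blast
  have "\<exists>a\<in>S. final_state ?B ?x U0 Us a \<noteq> 0"
  proof (rule ccontr)
    assume "\<not> ?thesis"
    then have "accept_prob ?B ?x U0 Us S = 0" unfolding accept_prob_def by simp
    then show False using pos by simp
  qed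
  then obtain a where a: "a \<in> S" "final_state ?B ?x U0 Us a \<noteq> 0" by blast
  let ?P = "\<lambda>x. final_state ?B x U0 Us a"
  have dP: "deg_le T ?P" using deg_le_final[OF finite_basis_set, of Us] len by simp
  have P0: "?P x = 0" if "x \<in> X0 m n" for x
  proof -
    have "(\<Sum>a\<in>S. (cmod (final_state ?B x U0 Us a))\<^sup>2) = 0" using acc0 that unfolding accept_prob_def by blast
    then have "\<forall>a\<in>S. (cmod (final_state ?B x U0 Us a))\<^sup>2 = 0"
      using sum_nonneg_eq_0_iff[OF finS, of "\<lambda>a. (cmod (final_state ?B x U0 Us a))\<^sup>2"] by simp
    then show ?thesis using a(1) by simp
  qed
  have "?P ?x = 0" by (rule key[OF m n T dP P0 x1])
  then show False using a(2) by simp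
qed



lemma run_queries_append: "run_queries B x (Us1 @ Us2) v = run_queries B x Us2 (run_queries B x Us1 v)"
  by (induction Us1 arbitrary: v) auto

definition permU :: "(basis \<Rightarrow> basis) \<Rightarrow> basis \<Rightarrow> basis \<Rightarrow> complex" where
  "permU \<pi> = (\<lambda>a b. if a = \<pi> b then 1 else 0)"

lemma permU_unitary:
  assumes fin: "finite B" and inv: "\<And>a. \<pi> (\<pi> a) = a" and pres: "\<And>a. a \<in> B \<Longrightarrow> \<pi> a \<in> B"
  shows "unitary_on B (permU \<pi>)"
  unfolding unitary_on_def
proof (intro ballI)
  fix a b assume a: "a \<in> B" and b: "b \<in> B"
  have "(\<Sum>c\<in>B. cnj (permU \<pi> c a) * permU \<pi> c b) = (\<Sum>c\<in>B. if c = \<pi> a then (if \<pi> a = \<pi> b then 1 else 0) else 0)"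
    by (rule sum.cong) (auto simp: permU_def)
  also have "\<dots> = (if \<pi> a = \<pi> b then 1 else 0)" using pres[OF a] fin by simp
  also have "\<dots> = (if a = b then 1 else 0)" by (metis inv)
  finally show "(\<Sum>c\<in>B. cnj (permU \<pi> c a) * permU \<pi> c b) = (if a = b then 1 else 0)" .
qed

lemma apply_permU:
  assumes fin: "finite B" and inv: "\<And>a. \<pi> (\<pi> a) = a" and pres: "\<And>a. a \<in> B \<Longrightarrow> \<pi> a \<in> B" and a: "a \<in> B"
  shows "apply_op (permU \<pi>) B v a = v (\<pi> a)"
proof -
  have "apply_op (permU \<pi>) B v a = (\<Sum>b\<in>B. if b = \<pi> a then v b else 0)"
    unfolding apply_op_def
  proof (rule sum.cong)
    fix b assume "b \<in> B"
    have "(a = \<pi> b) = (b = \<pi> a)" by (metis inv)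
    then show "permU \<pi> a b * v b = (if b = \<pi> a then v b else 0)" by (simp add: permU_def)
  qed simp
  also have "\<dots> = v (\<pi> a)" using pres[OF a] fin by simp
  finally show ?thesis .
qed

definition hh :: "(basis \<Rightarrow> real) \<Rightarrow> basis \<Rightarrow> basis \<Rightarrow> basis \<Rightarrow> complex" where
  "hh u e = (\<lambda>a b. complex_of_real ((if a = b then 1 else 0) -
      ((if a = e then 1 else 0) - u a) * ((if b = e then 1 else 0) - u b)))"

lemma hh_unitary:
  assumes fin: "finite B" and e: "e \<in> B" and ue: "u e = 0" and nu: "(\<Sum>c\<in>B. (u c)\<^sup>2) = 1"
  shows "unitary_on B (hh u e)"
  unfolding unitary_on_def
proof (intro ballI)
  fix a b assume a: "a \<in> B" and b: "b \<in> B"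
  define w where "w = (\<lambda>c. (if c = e then 1 else 0) - u c :: real)"
  have ww: "(\<Sum>c\<in>B. w c * w c) = 2"
  proof -
    have "(\<Sum>c\<in>B. w c * w c) = (\<Sum>c\<in>B. (if c = e then 1 else 0) - 2 * (if c = e then u c else 0) + (u c)\<^sup>2)"
      by (rule sum.cong) (auto simp: w_def power2_eq_square algebra_simps)
    also have "\<dots> = 1 - 2 * u e + 1" using fin e nu by (simp add: sum.distrib sum_subtractf sum_distrib_left[symmetric])
    finally show ?thesis using ue by simp
  qed
  have "(\<Sum>c\<in>B. cnj (hh u e c a) * hh u e c b) =
        complex_of_real (\<Sum>c\<in>B. ((if c = a then 1 else 0) - w c * w a) * ((if c = b then 1 else 0) - w c * w b))"
    by (simp add: hh_def w_def)
  also have "(\<Sum>c\<in>B. ((if c = a then 1 else 0) - w c * w a) * ((if c = b then 1 else 0) - w c * w b)) =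
      (\<Sum>c\<in>B. (if c = a then (if a = b then 1 else 0) else 0) - (if c = b then w b * w a else 0)
          - (if c = a then w a * w b else 0) + w a * w b * (w c * w c))"
    by (rule sum.cong) (auto simp: algebra_simps)
  also have "\<dots> = (if a = b then 1 else 0) - w b * w a - w a * w b + w a * w b * 2"
    using fin a b ww by (simp add: sum.distrib sum_subtractf sum_distrib_left[symmetric])
  also have "\<dots> = (if a = b then 1 else 0)" by simp
  finally show "(\<Sum>c\<in>B. cnj (hh u e c a) * hh u e c b) = (if a = b then 1 else 0)" by simp
qed

lemma hh_col: "u e = 0 \<Longrightarrow> hh u e a e = complex_of_real (u a)"
  by (simp add: hh_def)

lemma hh_row: "u e = 0 \<Longrightarrow> hh u e e b = complex_of_real (u b)"
  by (simp add: hh_def)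

lemma sum_image_ind:
  fixes f :: "basis \<Rightarrow> 'b::comm_monoid_add"
  assumes fin: "finite B" and inj: "inj_on q {..<M}" and sub: "\<And>k. k < M \<Longrightarrow> q k \<in> B"
  shows "(\<Sum>a\<in>B. if \<exists>k<M. a = q k then f a else 0) = (\<Sum>k<M. f (q k))"
proof -
  have "(\<Sum>a\<in>B. if \<exists>k<M. a = q k then f a else 0) = (\<Sum>a\<in>B. if a \<in> q ` {..<M} then f a else 0)"
    by (rule sum.cong) auto
  also have "\<dots> = (\<Sum>a\<in>B \<inter> q ` {..<M}. f a)" using fin by (simp add: sum.inter_restrict)
  also have "B \<inter> q ` {..<M} = q ` {..<M}" using sub by auto
  also have "(\<Sum>a\<in>q ` {..<M}. f a) = (\<Sum>k<M. f (q k))" using inj by (simp add: sum.reindex)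
  finally show ?thesis .
qed


definition tr :: "nat \<Rightarrow> nat \<Rightarrow> nat \<Rightarrow> nat" where
  "tr p q i = (if i = p then q else if i = q then p else i)"

lemma tr_tr[simp]: "tr p q (tr p q i) = i"
  by (simp add: tr_def)

lemma set_bit_lt: "(r::nat) < 2^d \<Longrightarrow> t < d \<Longrightarrow> set_bit t r < 2^d"
  by (metis take_bit_nat_eq_self_iff take_bit_set_bit_eq not_le)

lemma unset_bit_lt: "(r::nat) < 2^d \<Longrightarrow> t < d \<Longrightarrow> unset_bit t r < 2^d"
  by (metis take_bit_nat_eq_self_iff take_bit_unset_bit_eq not_le)

locale qalg =
  fixes N d M :: nat and s :: "nat \<Rightarrow> nat \<Rightarrow> nat" and g :: "nat \<Rightarrow> nat \<Rightarrow> bool \<Rightarrow> real"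
  assumes Npos: "0 < N" and dpos: "0 < d" and Mpos: "0 < M" and s_lt: "\<And>k t. k < M \<Longrightarrow> t < d \<Longrightarrow> s k t < N"
begin

definition "R = (2::nat)^d"
definition "W = 1 + M * R"
definition "BB = basis_set N W"
definition "enc k r = 1 + k * R + r"
definition "e0 = (0::nat, False, 0::nat)"

fun ans :: "nat \<Rightarrow> nat \<Rightarrow> (nat \<Rightarrow> bool) \<Rightarrow> nat" where
  "ans k 0 x = 0"
| "ans k (Suc t) x = (if x (s k t) then set_bit t (ans k t x) else ans k t x)"

lemma Rpos: "0 < R" by (simp add: R_def)

lemma enc_dec: "r < R \<Longrightarrow> (enc k r - 1) div R = k \<and> (enc k r - 1) mod R = r \<and> 1 \<le> enc k r"
  using Rpos by (simp add: enc_def)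

lemma enc_lt: "k < M \<Longrightarrow> r < R \<Longrightarrow> enc k r < W"
proof -
  assume "k < M" "r < R"
  then have "k * R + r < (k + 1) * R" by simp
  also have "\<dots> \<le> M * R" using \<open>k < M\<close> by (intro mult_right_mono) auto
  finally show ?thesis by (simp add: enc_def W_def)
qed

lemma enc_inj: "r < R \<Longrightarrow> r' < R \<Longrightarrow> enc k r = enc k' r' \<Longrightarrow> k = k' \<and> r = r'"
  using enc_dec by metis

lemma bit_ans: "bit (ans k t x) n \<longleftrightarrow> n < t \<and> x (s k n)"
  by (induction t) (auto simp: bit_set_bit_iff less_Suc_eq)

lemma ans_lt: "ans k t x < 2^t"
proof (induction t)
  case (Suc t)
  have "set_bit t (ans k t x) \<le> ans k t x + 2^t" by (simp add: set_bit_eq)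
  then show ?case using Suc by auto
qed simp

lemma ans_lt_R: "t \<le> d \<Longrightarrow> ans k t x < R"
  using ans_lt[of k t x] unfolding R_def
  by (meson less_le_trans one_less_numeral_iff power_increasing_iff semiring_norm(76) order.refl power_increasing one_le_numeral)


definition piT :: "nat \<Rightarrow> basis \<Rightarrow> basis" where
  "piT t a = (case a of (i, b, z) \<Rightarrow>
     (if 1 \<le> z \<and> (z - 1) div R < M then
        (tr (s ((z - 1) div R) t) (s ((z - 1) div R) (Suc t)) i, bit ((z - 1) mod R) t,
         enc ((z - 1) div R) (if b then set_bit t ((z - 1) mod R) else unset_bit t ((z - 1) mod R)))
      else (i, b, z)))"

lemma piT_inv: assumes t: "t < d" shows "piT t (piT t a) = a"
proof -
  obtain i b z where a: "a = (i, b, z)" by (cases a) auto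
  show ?thesis
  proof (cases "1 \<le> z \<and> (z - 1) div R < M")
    case True
    define k where "k = (z - 1) div R"
    define r where "r = (z - 1) mod R"
    have rR: "r < R" using Rpos by (simp add: r_def)
    define r' where "r' = (if b then set_bit t r else unset_bit t r)"
    have r'R: "r' < R" using rR t set_bit_lt unset_bit_lt unfolding r'_def R_def by auto
    have pa: "piT t a = (tr (s k t) (s k (Suc t)) i, bit r t, enc k r')"
      using True by (simp add: a piT_def k_def r_def r'_def)
    have dec: "(enc k r' - 1) div R = k" "(enc k r' - 1) mod R = r'" "1 \<le> enc k r'" using enc_dec[OF r'R] by auto
    have kM: "k < M" using True k_def by simp
    have b1: "bit r' t = b" by (simp add: r'_def bit_set_bit_iff bit_unset_bit_iff)
    have r2: "(if bit r t then set_bit t r' else unset_bit t r') = r"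
      by (rule bit_eqI) (auto simp: r'_def bit_set_bit_iff bit_unset_bit_iff)
    have z: "enc k r = z" using True unfolding enc_def k_def r_def by simp
    have cnd: "1 \<le> enc k r' \<and> k < M" using dec kM by simp
    have "piT t (piT t a) = piT t (tr (s k t) (s k (Suc t)) i, bit r t, enc k r')" using pa by simp
    also have "\<dots> = (tr (s k t) (s k (Suc t)) (tr (s k t) (s k (Suc t)) i), bit r' t,
         enc k (if bit r t then set_bit t r' else unset_bit t r'))"
      unfolding piT_def prod.case dec(1) dec(2) if_P[OF cnd] by (rule refl)
    also have "\<dots> = a" unfolding r2 b1 z tr_tr a by (rule refl)
    finally show ?thesis .
  next
    case False
    have "piT t a = a" unfolding piT_def a prod.case if_not_P[OF False] by (rule refl)
    then show ?thesis by simp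
  qed
qed

lemma piT_B: assumes t: "Suc t < d" and a: "a \<in> BB" shows "piT t a \<in> BB"
proof -
  obtain i b z where a': "a = (i, b, z)" by (cases a) auto
  have iN: "i < N" and zW: "z < W" using a by (auto simp: a' BB_def basis_set_def)
  show ?thesis
  proof (cases "1 \<le> z \<and> (z - 1) div R < M")
    case True
    define k where "k = (z - 1) div R"
    define r where "r = (z - 1) mod R"
    have rR: "r < R" using Rpos by (simp add: r_def)
    define r' where "r' = (if b then set_bit t r else unset_bit t r)"
    have r'R: "r' < R" using rR t set_bit_lt unset_bit_lt unfolding r'_def R_def by auto
    have kM: "k < M" using True k_def by simp
    have pa: "piT t a = (tr (s k t) (s k (Suc t)) i, bit r t, enc k r')"
      using True by (simp add: a' piT_def k_def r_def r'_def)
    have "tr (s k t) (s k (Suc t)) i < N" using s_lt[OF kM] t iN by (simp add: tr_def)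
    moreover have "enc k r' < W" by (rule enc_lt[OF kM r'R])
    ultimately show ?thesis using pa by (simp add: BB_def basis_set_def)
  next
    case False
    have "piT t a = a" unfolding piT_def a' prod.case if_not_P[OF False] by (rule refl)
    then show ?thesis using a by simp
  qed
qed

definition pst :: "nat \<Rightarrow> (nat \<Rightarrow> bool) \<Rightarrow> nat \<Rightarrow> basis" where
  "pst t x k = (s k t, False, enc k (ans k t x))"

definition qst :: "nat \<Rightarrow> (nat \<Rightarrow> bool) \<Rightarrow> nat \<Rightarrow> basis" where
  "qst t x k = (s k t, x (s k t), enc k (ans k t x))"

lemma piT_qst: assumes t: "Suc t < d" and k: "k < M" shows "piT t (qst t x k) = pst (Suc t) x k"
proof -
  have rR: "ans k t x < R" using ans_lt_R t by simp
  have dec: "(enc k (ans k t x) - 1) div R = k" "(enc k (ans k t x) - 1) mod R = ans k t x" "1 \<le> enc k (ans k t x)"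
    using enc_dec[OF rR] by auto
  have nb: "\<not> bit (ans k t x) t" by (simp add: bit_ans)
  have us: "unset_bit t (ans k t x) = ans k t x"
    by (rule bit_eqI) (auto simp: bit_unset_bit_iff nb)
  show ?thesis using dec k nb us by (simp add: piT_def qst_def pst_def tr_def)
qed

lemma pst_B: "t < d \<Longrightarrow> k < M \<Longrightarrow> pst t x k \<in> BB"
  using s_lt enc_lt ans_lt_R by (simp add: pst_def BB_def basis_set_def)

lemma qst_B: "t < d \<Longrightarrow> k < M \<Longrightarrow> qst t x k \<in> BB"
  using s_lt enc_lt ans_lt_R by (simp add: qst_def BB_def basis_set_def)

lemma qst_inj: "t < d \<Longrightarrow> inj_on (qst t x) {..<M}"
  unfolding inj_on_def qst_def using enc_inj ans_lt_R by (metis Pair_inject less_imp_le)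

lemma pst_inj: "t < d \<Longrightarrow> inj_on (pst t x) {..<M}"
  unfolding inj_on_def pst_def using enc_inj ans_lt_R by (metis Pair_inject less_imp_le)

definition "c0 = 1 / sqrt (real M)"

definition st :: "nat \<Rightarrow> (nat \<Rightarrow> bool) \<Rightarrow> basis \<Rightarrow> complex" where
  "st t x a = (if a \<in> BB \<and> (\<exists>k<M. a = pst t x k) then complex_of_real c0 else 0)"

lemma query_st: assumes a: "a \<in> BB" and v: "\<And>a. a \<in> BB \<Longrightarrow> v a = st t x a"
  shows "query_op x v a = (if \<exists>k<M. a = qst t x k then complex_of_real c0 else 0)"
proof -
  obtain i b z where a': "a = (i, b, z)" by (cases a) auto
  have inB: "(i, b \<noteq> x i, z) \<in> BB" using a by (simp add: a' BB_def basis_set_def)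
  have "query_op x v a = st t x (i, b \<noteq> x i, z)" using v[OF inB] by (simp add: a' query_op_def)
  also have "\<dots> = (if \<exists>k<M. a = qst t x k then complex_of_real c0 else 0)"
    using inB by (auto simp: st_def a' pst_def qst_def)
  finally show ?thesis .
qed

lemma step_st: assumes t: "Suc t < d" and v: "\<And>a. a \<in> BB \<Longrightarrow> v a = st t x a" and a: "a \<in> BB"
  shows "apply_op (permU (piT t)) BB (query_op x v) a = st (Suc t) x a"
proof -
  have fin: "finite BB" by (simp add: BB_def basis_set_def)
  have tt: "t < d" using t by simp
  have "apply_op (permU (piT t)) BB (query_op x v) a = query_op x v (piT t a)"
    by (rule apply_permU[OF fin piT_inv[OF tt] piT_B[OF t] a])
  also have "\<dots> = (if \<exists>k<M. piT t a = qst t x k then complex_of_real c0 else 0)"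
    by (rule query_st[OF piT_B[OF t a] v])
  also have "(\<exists>k<M. piT t a = qst t x k) = (\<exists>k<M. a = pst (Suc t) x k)"
    using piT_qst[OF t] piT_inv[OF tt] by metis
  finally show ?thesis using a by (simp add: st_def)
qed


lemma finBB: "finite BB" by (simp add: BB_def basis_set_def)

lemma e0_B: "e0 \<in> BB" using Npos by (simp add: e0_def BB_def basis_set_def W_def)

definition psi0 :: "basis \<Rightarrow> real" where
  "psi0 a = (if a \<in> BB \<and> (\<exists>k<M. a = pst 0 (\<lambda>_. False) k) then c0 else 0)"

lemma pst0: "pst 0 x k = pst 0 (\<lambda>_. False) k" by (simp add: pst_def)

lemma psi0_e0: "psi0 e0 = 0"
  by (auto simp: psi0_def e0_def pst_def enc_def)

lemma psi0_norm: "(\<Sum>a\<in>BB. (psi0 a)\<^sup>2) = 1"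
proof -
  have "(\<Sum>a\<in>BB. (psi0 a)\<^sup>2) = (\<Sum>a\<in>BB. if \<exists>k<M. a = pst 0 (\<lambda>_. False) k then c0\<^sup>2 else 0)"
    by (rule sum.cong) (auto simp: psi0_def)
  also have "\<dots> = (\<Sum>k<M. c0\<^sup>2)"
    by (rule sum_image_ind[OF finBB pst_inj pst_B]) (use dpos in auto)
  also have "\<dots> = 1" using Mpos by (simp add: c0_def power_divide)
  finally show ?thesis .
qed

definition "UU0 = hh psi0 e0"

lemma init_eq: "apply_op UU0 BB init_state a = complex_of_real (psi0 a)"
proof -
  have "apply_op UU0 BB init_state a = (\<Sum>b\<in>BB. if b = e0 then UU0 a b else 0)"
    unfolding apply_op_def by (rule sum.cong) (auto simp: init_state_def e0_def)
  also have "\<dots> = UU0 a e0" using finBB e0_B by simp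
  also have "\<dots> = complex_of_real (psi0 a)" by (simp add: UU0_def hh_col psi0_e0)
  finally show ?thesis .
qed

lemma evol: "t < d \<Longrightarrow> a \<in> BB \<Longrightarrow>
   run_queries BB x (map (\<lambda>t. permU (piT t)) [0..<t]) (apply_op UU0 BB init_state) a = st t x a"
proof (induction t arbitrary: a)
  case 0
  then show ?case using pst0[of x] by (auto simp: init_eq psi0_def st_def)
next
  case (Suc t)
  have "run_queries BB x (map (\<lambda>t. permU (piT t)) [0..<Suc t]) (apply_op UU0 BB init_state) a =
     apply_op (permU (piT t)) BB (query_op x (run_queries BB x (map (\<lambda>t. permU (piT t)) [0..<t]) (apply_op UU0 BB init_state))) a"
    by (simp add: run_queries_append)
  also have "\<dots> = st (Suc t) x a"
    by (rule step_st[OF Suc.prems(1) _ Suc.prems(2)]) (use Suc in simp)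
  finally show ?case .
qed

definition G :: "nat \<Rightarrow> bool \<Rightarrow> nat \<Rightarrow> real" where
  "G k b r = (\<Prod>t<d-1. g k t (bit r t)) * g k (d-1) b"

definition uu0 :: "basis \<Rightarrow> real" where
  "uu0 a = (case a of (i, b, z) \<Rightarrow>
     if a \<in> BB \<and> 1 \<le> z \<and> i = s ((z - 1) div R) (d-1) then G ((z - 1) div R) b ((z - 1) mod R) else 0)"

definition "nu = sqrt (\<Sum>a\<in>BB. (uu0 a)\<^sup>2)"

definition "uu a = uu0 a / nu"

definition F :: "(nat \<Rightarrow> bool) \<Rightarrow> real" where
  "F x = (\<Sum>k<M. \<Prod>t<d. g k t (x (s k t)))"

lemma uu0_qst: assumes k: "k < M" shows "uu0 (qst (d-1) x k) = (\<Prod>t<d. g k t (x (s k t)))"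
proof -
  have rR: "ans k (d-1) x < R" using ans_lt_R by simp
  have dec: "(enc k (ans k (d-1) x) - 1) div R = k" "(enc k (ans k (d-1) x) - 1) mod R = ans k (d-1) x"
    "1 \<le> enc k (ans k (d-1) x)" using enc_dec[OF rR] by auto
  have inB: "qst (d-1) x k \<in> BB" using qst_B k dpos by simp
  have "uu0 (qst (d-1) x k) = G k (x (s k (d-1))) (ans k (d-1) x)"
    using inB dec by (simp add: uu0_def qst_def)
  also have "\<dots> = (\<Prod>t<d. g k t (x (s k t)))"
  proof -
    obtain d' where d': "d = Suc d'" using dpos by (cases d) auto
    have "(\<Prod>t<d'. g k t (bit (ans k d' x) t)) = (\<Prod>t<d'. g k t (x (s k t)))"
      by (rule prod.cong) (auto simp: bit_ans)
    then show ?thesis unfolding G_def by (simp add: d')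
  qed
  finally show ?thesis .
qed

lemma uu0_e0: "uu0 e0 = 0" by (simp add: uu0_def e0_def)

lemma nu_pos: assumes "F x \<noteq> 0" shows "nu > 0"
proof -
  obtain k where k: "k < M" "(\<Prod>t<d. g k t (x (s k t))) \<noteq> 0"
    using assms unfolding F_def by (meson sum.neutral lessThan_iff)
  have inB: "qst (d-1) x k \<in> BB" using qst_B k dpos by simp
  have "uu0 (qst (d-1) x k) \<noteq> 0" using uu0_qst k by simp
  then have "(\<Sum>a\<in>BB. (uu0 a)\<^sup>2) \<noteq> 0"
    using sum_nonneg_eq_0_iff[OF finBB, of "\<lambda>a. (uu0 a)\<^sup>2"] inB by auto
  moreover have "(\<Sum>a\<in>BB. (uu0 a)\<^sup>2) \<ge> 0" by (simp add: sum_nonneg)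
  ultimately show ?thesis unfolding nu_def by simp
qed

lemma uu_norm: assumes "nu > 0" shows "(\<Sum>a\<in>BB. (uu a)\<^sup>2) = 1"
proof -
  have "(\<Sum>a\<in>BB. (uu a)\<^sup>2) = (\<Sum>a\<in>BB. (uu0 a)\<^sup>2) / nu\<^sup>2"
    by (simp add: uu_def power_divide sum_divide_distrib)
  also have "nu\<^sup>2 = (\<Sum>a\<in>BB. (uu0 a)\<^sup>2)" unfolding nu_def by (simp add: sum_nonneg)
  finally show ?thesis using assms unfolding nu_def by simp
qed

definition "UUs = map (\<lambda>t. permU (piT t)) [0..<d-1] @ [hh uu e0]"

lemma hhrow_uu: "hh uu e0 e0 b = complex_of_real (uu b)"
  by (rule hh_row) (simp add: uu_def uu0_e0)

lemma final_amp: "final_state BB x UU0 UUs e0 = complex_of_real (c0 / nu * F x)"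
proof -
  define vv where "vv = run_queries BB x (map (\<lambda>t. permU (piT t)) [0..<d-1]) (apply_op UU0 BB init_state)"
  have v: "\<And>a. a \<in> BB \<Longrightarrow> vv a = st (d-1) x a" using evol dpos unfolding vv_def by simp
  have "final_state BB x UU0 UUs e0 = apply_op (hh uu e0) BB (query_op x vv) e0"
    by (simp add: final_state_def UUs_def run_queries_append vv_def)
  also have "\<dots> = (\<Sum>b\<in>BB. if \<exists>k<M. b = qst (d-1) x k then complex_of_real (uu b * c0) else 0)"
    unfolding apply_op_def
    by (rule sum.cong[OF refl]) (auto simp: hhrow_uu query_st[OF _ v])
  also have "\<dots> = (\<Sum>k<M. complex_of_real (uu (qst (d-1) x k) * c0))"
    by (rule sum_image_ind[OF finBB qst_inj qst_B]) (use dpos in auto)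
  also have "\<dots> = (\<Sum>k<M. complex_of_real (c0 / nu * (\<Prod>t<d. g k t (x (s k t)))))"
  proof (rule sum.cong[OF refl])
    fix k assume "k \<in> {..<M}"
    then have "uu0 (qst (d-1) x k) = (\<Prod>t<d. g k t (x (s k t)))" using uu0_qst by simp
    then show "complex_of_real (uu (qst (d-1) x k) * c0) = complex_of_real (c0 / nu * (\<Prod>t<d. g k t (x (s k t))))"
      unfolding uu_def by simp
  qed
  also have "\<dots> = complex_of_real (c0 / nu * F x)"
    unfolding F_def sum_distrib_left of_real_sum by (rule refl)
  finally show ?thesis .
qed

lemma alg_exists:
  assumes "F x1 \<noteq> 0"
  shows "\<exists>W U0 Us S cc. W > 0 \<and> length Us = d \<and> unitary_on (basis_set N W) U0 \<and>
     (\<forall>U\<in>set Us. unitary_on (basis_set N W) U) \<and> S \<subseteq> basis_set N W \<and> cc > 0 \<and>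
     (\<forall>x. accept_prob (basis_set N W) x U0 Us S = cc * (F x)\<^sup>2)"
proof (intro exI conjI)
  have nu: "nu > 0" by (rule nu_pos[OF assms])
  show "W > 0" by (simp add: W_def)
  show "length UUs = d" using dpos by (simp add: UUs_def)
  show "unitary_on (basis_set N W) UU0"
    unfolding UU0_def BB_def[symmetric] by (rule hh_unitary[OF finBB e0_B psi0_e0 psi0_norm])
  show "\<forall>U\<in>set UUs. unitary_on (basis_set N W) U"
  proof
    fix U assume "U \<in> set UUs"
    then have "U = hh uu e0 \<or> (\<exists>t<d-1. U = permU (piT t))" by (auto simp: UUs_def)
    then show "unitary_on (basis_set N W) U"
    proof
      assume "U = hh uu e0"
      have "uu e0 = 0" by (simp add: uu_def uu0_e0)
      then show ?thesis unfolding BB_def[symmetric] \<open>U = hh uu e0\<close>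
        using hh_unitary[OF finBB e0_B _ uu_norm[OF nu]] by simp
    next
      assume "\<exists>t<d-1. U = permU (piT t)"
      then obtain t where t0: "t < d - 1" "U = permU (piT t)" by blast
      then have t: "Suc t < d" "U = permU (piT t)" by auto
      show ?thesis unfolding BB_def[symmetric] t(2)
        by (rule permU_unitary[OF finBB piT_inv piT_B]) (use t in auto)
    qed
  qed
  show "{e0} \<subseteq> basis_set N W" using e0_B by (simp add: BB_def)
  show "(c0 / nu)\<^sup>2 > 0" using nu Mpos by (simp add: c0_def)
  show "\<forall>x. accept_prob (basis_set N W) x UU0 UUs {e0} = (c0 / nu)\<^sup>2 * (F x)\<^sup>2"
    unfolding BB_def[symmetric] accept_prob_def
    by (simp add: final_amp power_mult_distrib power2_abs power_divide norm_mult norm_divide)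
qed

end



lemma nq_from_sum:
  fixes K :: "'k set" and s :: "'k \<Rightarrow> nat \<Rightarrow> nat" and g :: "'k \<Rightarrow> nat \<Rightarrow> bool \<Rightarrow> real"
  assumes N: "0 < N" and d: "0 < d" and K: "finite K" "K \<noteq> {}"
    and s: "\<And>\<kappa> t. \<kappa> \<in> K \<Longrightarrow> t < d \<Longrightarrow> s \<kappa> t < N"
    and F1: "\<And>x. x \<in> Xone \<Longrightarrow> (\<Sum>\<kappa>\<in>K. \<Prod>t<d. g \<kappa> t (x (s \<kappa> t))) \<noteq> 0"
    and F0: "\<And>x. x \<in> Xzero \<Longrightarrow> (\<Sum>\<kappa>\<in>K. \<Prod>t<d. g \<kappa> t (x (s \<kappa> t))) = 0"
    and x1: "x1 \<in> Xone"
  shows "nq_algorithm N d Xzero Xone"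
proof -
  obtain e where e: "bij_betw e {0..<card K} K" using ex_bij_betw_nat_finite[OF K(1)] by blast
  have eK: "\<And>k. k < card K \<Longrightarrow> e k \<in> K" using e by (auto simp: bij_betw_def)
  interpret Q: qalg N d "card K" "\<lambda>k. s (e k)" "\<lambda>k. g (e k)"
    by unfold_locales (use N d K s eK in auto)
  have FF: "Q.F x = (\<Sum>\<kappa>\<in>K. \<Prod>t<d. g \<kappa> t (x (s \<kappa> t)))" for x
  proof -
    have "Q.F x = (\<Sum>k\<in>{0..<card K}. (\<lambda>\<kappa>. \<Prod>t<d. g \<kappa> t (x (s \<kappa> t))) (e k))"
      unfolding Q.F_def by (simp add: lessThan_atLeast0)
    also have "\<dots> = (\<Sum>\<kappa>\<in>K. \<Prod>t<d. g \<kappa> t (x (s \<kappa> t)))" by (rule sum.reindex_bij_betw[OF e])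
    finally show ?thesis .
  qed
  have Fx1: "Q.F x1 \<noteq> 0" using F1[OF x1] FF by simp
  obtain W U0 Us S cc where alg: "W > 0" "length Us = d" "unitary_on (basis_set N W) U0"
     "\<forall>U\<in>set Us. unitary_on (basis_set N W) U" "S \<subseteq> basis_set N W" "cc > 0"
     "\<forall>x. accept_prob (basis_set N W) x U0 Us S = cc * (Q.F x)\<^sup>2"
    using Q.alg_exists[OF Fx1] by blast
  show ?thesis unfolding nq_algorithm_def
  proof (intro exI conjI)
    show "\<forall>x\<in>Xone. accept_prob (basis_set N W) x U0 Us S > 0"
      using alg(6,7) F1 FF by simp
    show "\<forall>x\<in>Xzero. accept_prob (basis_set N W) x U0 Us S = 0"
      using alg(7) F0 FF by simp
  qed (use alg in auto)
qed


lemma ind_sum_card: "(\<Sum>i<(m::nat). if P i then 1 else 0 :: real) = real (card {i. i < m \<and> P i})"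
proof -
  have "(\<Sum>i<m. if P i then 1 else 0 :: real) = (\<Sum>i\<in>{..<m} \<inter> {i. P i}. 1) + (\<Sum>i\<in>{..<m} \<inter> - {i. P i}. 0)"
    by (rule sum.If_cases) simp
  also have "{..<m} \<inter> {i. P i} = {i. i < m \<and> P i}" by auto
  finally show ?thesis by simp
qed

lemma A0_card: assumes "inA m False (block m x j)"
  shows "m \<le> 2 * card {i. i < m \<and> x (2*m*j + i)}" "card {i. i < m \<and> x (2*m*j + i)} \<le> m"
proof -
  show "m \<le> 2 * card {i. i < m \<and> x (2*m*j + i)}" using assms by (simp add: inA_def block_def)
  have "card {i. i < m \<and> x (2*m*j + i)} \<le> card {..<m}" by (rule card_mono) auto
  then show "card {i. i < m \<and> x (2*m*j + i)} \<le> m" by simp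
qed

lemma A1_zero: "inA m True (block m x j) \<Longrightarrow> i < m \<Longrightarrow> \<not> x (2*m*j + i)"
  by (simp add: inA_def block_def)

lemma blk_bound: assumes "j < n" "i < (m::nat)" shows "2*m*j + i < 2*m*n"
proof -
  have "2*m*j + i < 2*m*j + 2*m" using assms by simp
  also have "\<dots> = 2*m*(j+1)" by simp
  also have "\<dots> \<le> 2*m*n" using assms(1) by (intro mult_le_mono2) simp
  finally show ?thesis .
qed

lemma upperA:
  assumes m: "0 < m" and n: "even n" "0 < n"
  shows "nq_algorithm (2*m*n) (n div 2 + 1) (X0 m n) (X1 m n)"
proof -
  define d where "d = n div 2 + 1"
  define K where "K = PiE {..<d} (\<lambda>_. {..<m})"
  define s where "s = (\<lambda>(\<phi>::nat \<Rightarrow> nat) t. 2*m*t + \<phi> t)"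
  define g where "g = (\<lambda>(\<phi>::nat \<Rightarrow> nat) (t::nat) b. if b then 1 else (0::real))"
  have dn: "d \<le> n" using n by (simp add: d_def)
  have SP: "(\<Sum>\<kappa>\<in>K. \<Prod>t<d. g \<kappa> t (x (s \<kappa> t))) = (\<Prod>t<d. \<Sum>i<m. if x (2*m*t + i) then 1 else 0)" for x
    unfolding K_def s_def g_def by (subst prod_sum_PiE) auto
  show ?thesis unfolding d_def[symmetric]
  proof (rule nq_from_sum[where K = K and s = s and g = g])
    show "0 < 2*m*n" using m n by simp
    show "0 < d" by (simp add: d_def)
    show "finite K" by (simp add: K_def finite_PiE)
    show "K \<noteq> {}" using m by (auto simp: K_def PiE_eq_empty_iff)
    show "s \<kappa> t < 2*m*n" if "\<kappa> \<in> K" "t < d" for \<kappa> t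
    proof -
      have "\<kappa> t < m" using that by (auto simp: K_def PiE_def Pi_def)
      then show ?thesis using blk_bound[of t n "\<kappa> t" m] that dn by (simp add: s_def)
    qed
    show "(\<Sum>\<kappa>\<in>K. \<Prod>t<d. g \<kappa> t (x (s \<kappa> t))) \<noteq> 0" if x: "x \<in> X1 m n" for x
    proof -
      have "(\<Prod>t<d. \<Sum>i<m. if x (2*m*t + i) then 1 else 0 :: real) > 0"
      proof (rule prod_pos)
        fix t assume "t \<in> {..<d}"
        then have "t < n" using dn by simp
        then have "inA m False (block m x t)" using x by (simp add: X1_def)
        then have "m \<le> 2 * card {i. i < m \<and> x (2*m*t + i)}" by (rule A0_card)
        then have "card {i. i < m \<and> x (2*m*t + i)} > 0" using m by linarith
        then show "(\<Sum>i<m. if x (2*m*t + i) then 1 else 0 :: real) > 0" by (simp add: ind_sum_card)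
      qed
      then show ?thesis unfolding SP by linarith
    qed
    show "(\<Sum>\<kappa>\<in>K. \<Prod>t<d. g \<kappa> t (x (s \<kappa> t))) = 0" if x: "x \<in> X0 m n" for x
    proof -
      obtain y where y: "2 * card {j. j < n \<and> y j} = n" "\<forall>j<n. inA m (y j) (block m x j)"
        using x by (auto simp: X0_def)
      have "\<exists>t<d. y t"
      proof (rule ccontr)
        assume "\<not> ?thesis"
        then have "{j. j < n \<and> y j} \<subseteq> {d..<n}" by (auto simp: subset_iff intro: leI)
        then have "card {j. j < n \<and> y j} \<le> card {d..<n}" by (rule card_mono[rotated]) simp
        then have "card {j. j < n \<and> y j} \<le> n - d" by simp
        then show False using y(1) n unfolding d_def by presburger
      qed
      then obtain t where t: "t < d" "y t" by blast
      have "t < n" using t dn by simp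
      then have "inA m (y t) (block m x t)" using y(2) by blast
      then have "inA m True (block m x t)" using t by simp
      then have "(\<Sum>i<m. if x (2*m*t + i) then 1 else 0 :: real) = 0"
        by (intro sum.neutral) (auto dest: A1_zero)
      then have "(\<Prod>t<d. \<Sum>i<m. if x (2*m*t + i) then 1 else 0 :: real) = 0"
        using t by (intro prod_zero) auto
      then show ?thesis using SP by simp
    qed
    show "(\<lambda>p. p mod (2*m) < m) \<in> X1 m n" by (rule X1_ex[OF m])
  qed
qed


lemma qprod_A0:
  assumes m: "0 < m" "even m" and K0: "m \<le> 2 * K0" "K0 \<le> m"
  shows "(\<Prod>t<m div 2 + 1. 1 - real K0 / real (m div 2 + t)) = 0"
proof (rule prod_zero)
  have "K0 - m div 2 \<in> {..<m div 2 + 1}" using K0 m by auto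
  moreover have "1 - real K0 / real (m div 2 + (K0 - m div 2)) = 0"
  proof -
    have "m div 2 + (K0 - m div 2) = K0" using K0 by auto
    moreover have "K0 > 0" using K0 m by auto
    ultimately show ?thesis by simp
  qed
  ultimately show "\<exists>t\<in>{..<m div 2 + 1}. 1 - real K0 / real (m div 2 + t) = 0" by blast
qed simp

lemma upperB:
  assumes m: "0 < m" "even m" and n: "even n" "0 < n"
  shows "nq_algorithm (2*m*n) (m div 2 + 1) (X0 m n) (X1 m n)"
proof -
  define d where "d = m div 2 + 1"
  define P where "P = PiE {..<d} (\<lambda>_. {..<m})"
  define K where "K = insert None (Some ` ({..<n} \<times> P))"
  define s where "s = (\<lambda>(\<kappa>::(nat \<times> (nat \<Rightarrow> nat)) option) t. case \<kappa> of None \<Rightarrow> 0 | Some (j, \<phi>) \<Rightarrow> 2*m*j + \<phi> t)"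
  define g where "g = (\<lambda>(\<kappa>::(nat \<times> (nat \<Rightarrow> nat)) option) (t::nat) b. case \<kappa> of
      None \<Rightarrow> (if t = 0 then - (real n / 2) else 1)
    | Some (j, \<phi>) \<Rightarrow> (1 / real m) * (1 - real m / real (m div 2 + t) * (if b then 1 else (0::real))))"
  define w where "w = (\<lambda>x j. real (card {i. i < m \<and> x (2*m*j + i)}))"
  define q where "q = (\<lambda>v. \<Prod>t<d. 1 - v / real (m div 2 + t))"
  have finP: "finite P" by (simp add: P_def finite_PiE)
  have SP: "(\<Sum>\<kappa>\<in>K. \<Prod>t<d. g \<kappa> t (x (s \<kappa> t))) = - (real n / 2) + (\<Sum>j<n. q (w x j))" for x
  proof -
    have None: "(\<Prod>t<d. g None t (x (s None t))) = - (real n / 2)"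
      unfolding d_def g_def by (simp add: prod.lessThan_Suc_shift del: prod.lessThan_Suc)
    have inner: "(\<Sum>\<phi>\<in>P. \<Prod>t<d. g (Some (j, \<phi>)) t (x (s (Some (j, \<phi>)) t))) = q (w x j)" for j
    proof -
      have "(\<Sum>\<phi>\<in>P. \<Prod>t<d. g (Some (j, \<phi>)) t (x (s (Some (j, \<phi>)) t))) =
            (\<Prod>t<d. \<Sum>i<m. (1 / real m) * (1 - real m / real (m div 2 + t) * (if x (2*m*j + i) then 1 else 0)))"
        unfolding P_def g_def s_def by (subst prod_sum_PiE) auto
      also have "\<dots> = q (w x j)" unfolding q_def
      proof (rule prod.cong[OF refl])
        fix t
        have "(\<Sum>i<m. (1 / real m) * (1 - real m / real (m div 2 + t) * (if x (2*m*j + i) then 1 else 0))) =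
              (1 / real m) * (real m - real m / real (m div 2 + t) * (\<Sum>i<m. if x (2*m*j + i) then 1 else 0))"
        proof -
          define c where "c = real m / real (m div 2 + t)"
          define f where "f = (\<lambda>i. if x (2*m*j + i) then 1 else (0::real))"
          have "(\<Sum>i<m. (1 / real m) * (1 - c * f i)) = (1 / real m) * (\<Sum>i<m. (1 - c * f i))"
            by (rule sum_distrib_left[symmetric])
          also have "(\<Sum>i<m. (1 - c * f i)) = real m - c * (\<Sum>i<m. f i)"
            by (simp add: sum_subtractf sum_distrib_left)
          finally show ?thesis unfolding c_def f_def .
        qed
        also have "\<dots> = 1 - w x j / real (m div 2 + t)"
          using m by (simp add: ind_sum_card w_def field_simps)
        finally show "(\<Sum>i<m. (1 / real m) * (1 - real m / real (m div 2 + t) * (if x (2*m*j + i) then 1 else 0))) =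
              1 - w x j / real (m div 2 + t)" .
      qed
      finally show ?thesis .
    qed
    have "(\<Sum>\<kappa>\<in>K. \<Prod>t<d. g \<kappa> t (x (s \<kappa> t))) =
          (\<Prod>t<d. g None t (x (s None t))) + (\<Sum>\<kappa>\<in>Some ` ({..<n} \<times> P). \<Prod>t<d. g \<kappa> t (x (s \<kappa> t)))"
      unfolding K_def using finP by (subst sum.insert) auto
    also have "(\<Sum>\<kappa>\<in>Some ` ({..<n} \<times> P). \<Prod>t<d. g \<kappa> t (x (s \<kappa> t))) =
          (\<Sum>jp\<in>{..<n} \<times> P. \<Prod>t<d. g (Some jp) t (x (s (Some jp) t)))"
      by (subst sum.reindex) auto
    also have "\<dots> = (\<Sum>j<n. \<Sum>\<phi>\<in>P. \<Prod>t<d. g (Some (j, \<phi>)) t (x (s (Some (j, \<phi>)) t)))"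
      by (subst sum.cartesian_product) (simp add: case_prod_beta)
    also have "\<dots> = (\<Sum>j<n. q (w x j))" using inner by simp
    finally show ?thesis using None by simp
  qed
  have qA0: "q (w x j) = 0" if "inA m False (block m x j)" for x j
    unfolding q_def w_def d_def using qprod_A0[OF m A0_card[OF that]] by simp
  have qA1: "q (w x j) = 1" if "inA m True (block m x j)" for x j
  proof -
    have e: "{i. i < m \<and> x (2*m*j + i)} = {}" using A1_zero[OF that] by auto
    show ?thesis unfolding q_def w_def e by simp
  qed
  show ?thesis unfolding d_def[symmetric]
  proof (rule nq_from_sum[where K = K and s = s and g = g])
    show "0 < 2*m*n" using m n by simp
    show "0 < d" by (simp add: d_def)
    show "finite K" using finP by (simp add: K_def)
    show "K \<noteq> {}" by (simp add: K_def)
    show "s \<kappa> t < 2*m*n" if "\<kappa> \<in> K" "t < d" for \<kappa> t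
    proof (cases \<kappa>)
      case None
      then show ?thesis using m n by (simp add: s_def)
    next
      case (Some jp)
      have jpin: "jp \<in> {..<n} \<times> P" using that(1) Some by (auto simp: K_def)
      obtain j \<phi> where jpe: "jp = (j, \<phi>)" by (cases jp)
      have jp: "\<kappa> = Some (j, \<phi>)" "j < n" "\<phi> \<in> P" using jpin jpe Some by auto
      have "\<phi> t < m" using jp(3) that(2) by (auto simp: P_def PiE_def Pi_def)
      then show ?thesis using blk_bound[OF jp(2)] jp(1) by (simp add: s_def)
    qed
    show "(\<Sum>\<kappa>\<in>K. \<Prod>t<d. g \<kappa> t (x (s \<kappa> t))) \<noteq> 0" if x: "x \<in> X1 m n" for x
    proof -
      have "(\<Sum>j<n. q (w x j)) = 0"
        by (rule sum.neutral) (use x qA0 in \<open>auto simp: X1_def\<close>)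
      then show ?thesis unfolding SP using n by simp
    qed
    show "(\<Sum>\<kappa>\<in>K. \<Prod>t<d. g \<kappa> t (x (s \<kappa> t))) = 0" if x: "x \<in> X0 m n" for x
    proof -
      obtain y where y: "2 * card {j. j < n \<and> y j} = n" "\<forall>j<n. inA m (y j) (block m x j)"
        using x by (auto simp: X0_def)
      have "(\<Sum>j<n. q (w x j)) = (\<Sum>j<n. if y j then 1 else 0)"
      proof (rule sum.cong[OF refl])
        fix j assume "j \<in> {..<n}"
        then have "inA m (y j) (block m x j)" using y(2) by simp
        then show "q (w x j) = (if y j then 1 else 0)" using qA0 qA1 by (cases "y j") auto
      qed
      also have "\<dots> = real (card {j. j < n \<and> y j})" by (rule ind_sum_card)
      finally have S: "(\<Sum>j<n. q (w x j)) = real (card {j. j < n \<and> y j})" .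
      have "real n = 2 * real (card {j. j < n \<and> y j})" using y(1) by (metis of_nat_mult of_nat_numeral)
      then show ?thesis unfolding SP S by simp
    qed
    show "(\<lambda>p. p mod (2*m) < m) \<in> X1 m n" by (rule X1_ex[OF m(1)])
  qed
qed


theorem theorem1:
  fixes m n :: nat
  assumes "even m" and "even n" and "m > 0" and "n > 0"
  shows "NQ (2*m*n) (X0 m n) (X1 m n) = min (n div 2) (m div 2) + 1"
  unfolding NQ_def
proof (rule Least_equality)
  show "nq_algorithm (2*m*n) (min (n div 2) (m div 2) + 1) (X0 m n) (X1 m n)"
  proof (cases "n div 2 \<le> m div 2")
    case True
    then show ?thesis using upperA[OF assms(3) assms(2) assms(4)] by (simp add: min_def)
  next
    case False
    then show ?thesis using upperB[OF assms(3) assms(1) assms(2) assms(4)] by (simp add: min_def)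
  qed
next
  fix T assume alg: "nq_algorithm (2*m*n) T (X0 m n) (X1 m n)"
  show "min (n div 2) (m div 2) + 1 \<le> T"
  proof (rule ccontr)
    assume "\<not> ?thesis"
    then have "T \<le> n div 2" "T \<le> m div 2" by auto
    then have "2*T \<le> m" "2*T \<le> n" by auto
    then show False using lower[OF assms(3) assms(1) assms(2) assms(4) alg] by simp
  qed
qed

end
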